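(* Let $M>0$ and let $(q(t),p(t))$ with $q(t)>0$ be a solution of Hamilton's equations $\dot q=\partial\mathcal H/\partial p$, $\dot p=-\partial\mathcal H/\partial q$ for the single rotating circular peakon Hamiltonian $\mathcal H(p,q)=\frac12\big(p^2+\frac{M^2}{q^2}\big)G(q,q)$, and let $E=\big(p^2+\frac{M^2}{q^2}\big)G(q,q)>0$ be its (conserved) value along the solution. Then there is a unique $q_*=q_*(M,E)>0$ satisfying $$q_*=M\sqrt{\frac{G(q_*,q_* )}{E}},$$ and $q(t)\ge q_*$ for all $t$ in the interval of existence; in particular the peakon circle never collapses to the origin.
   Context: $G(q,q)=I_1(q)K_1(q)$, where $I_1,K_1$ are the modified Bessel functions of order one; more generally $G(r,\xi)=I_1(\min(r,\xi))K_1(\max(r,\xi))$ is the Green's function of the radial Helmholtz operator $1-\frac1r\partial_r r\partial_r+\frac1{r^2}$. *)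

theory Defs
  imports "HOL-Analysis.Analysis"
begin

definition besselI1 :: "real \<Rightarrow> real" where
  "besselI1 x = (\<Sum>k. (x / 2) ^ (2 * k + 1) / (fact k * fact (k + 1)))"

text \<open>Modified Bessel function of the second kind of order one
  (integral representation, valid for x > 0).\<close>
definition besselK1 :: "real \<Rightarrow> real" where
  "besselK1 x = integral {0..} (\<lambda>t. exp (- x * cosh t) * cosh t)"

text \<open>Green's function of the radial Helmholtz operator.\<close>
definition GreenG :: "real \<Rightarrow> real \<Rightarrow> real" where
  "GreenG r \<xi> = besselI1 (min r \<xi>) * besselK1 (max r \<xi>)"

definition peakonH :: "real \<Rightarrow> real \<Rightarrow> real \<Rightarrow> real" where
  "peakonH M p q = (1 / 2) * (p ^ 2 + M ^ 2 / q ^ 2) * GreenG q q"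

end

theory Submission
  imports Defs
begin

lemma pow_le_exp:
  fixes s :: real and m :: nat
  assumes "s \<ge> 0" "m > 0"
  shows "s ^ m \<le> real m ^ m * exp s"
proof -
  have "(s / real m) ^ m \<le> (1 + s / real m) ^ m"
    using assms by (intro power_mono) auto
  also have "\<dots> \<le> exp s"
    using assms by (intro exp_ge_one_plus_x_over_n_power_n) auto
  finally have "s ^ m / real m ^ m \<le> exp s" by (simp add: power_divide)
  thus ?thesis using assms by (simp add: field_simps)
qed

lemma exp_le_2cosh: "exp (t::real) \<le> 2 * cosh t"
  by (simp add: cosh_def)

lemma Kint_bound:
  fixes x t :: real
  assumes x: "x > 0"
  shows "exp (- x * cosh t) * cosh t ^ n \<le> (2 * real (Suc n) ^ Suc n / x ^ Suc n) * exp (- 1 * t)"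
proof -
  have c1: "cosh t \<ge> 1" by (rule cosh_real_ge_1)
  have "exp t * (exp (- x * cosh t) * cosh t ^ n) \<le> 2 * cosh t * (exp (- x * cosh t) * cosh t ^ n)"
    using exp_le_2cosh[of t] by (intro mult_right_mono) auto
  also have "\<dots> = 2 * (cosh t ^ Suc n * exp (- x * cosh t))" by simp
  also have "\<dots> \<le> 2 * (real (Suc n) ^ Suc n / x ^ Suc n)"
  proof -
    have "(x * cosh t) ^ Suc n \<le> real (Suc n) ^ Suc n * exp (x * cosh t)"
      using x c1 by (intro pow_le_exp) auto
    hence "cosh t ^ Suc n * x ^ Suc n \<le> real (Suc n) ^ Suc n * exp (x * cosh t)"
      by (simp add: power_mult_distrib mult_ac)
    hence "cosh t ^ Suc n * x ^ Suc n * exp (- x * cosh t) \<le> real (Suc n) ^ Suc n * exp (x * cosh t) * exp (- x * cosh t)"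
      by (intro mult_right_mono) auto
    also have "\<dots> = real (Suc n) ^ Suc n" by (simp add: mult.assoc flip: exp_add)
    finally have "(cosh t ^ Suc n * exp (- x * cosh t)) * x ^ Suc n \<le> real (Suc n) ^ Suc n"
      by (simp add: mult_ac)
    hence "cosh t ^ Suc n * exp (- x * cosh t) \<le> real (Suc n) ^ Suc n / x ^ Suc n"
      using x by (simp add: pos_le_divide_eq)
    thus ?thesis by simp
  qed
  finally have "exp t * (exp (- x * cosh t) * cosh t ^ n) \<le> 2 * (real (Suc n) ^ Suc n / x ^ Suc n)" .
  hence "(exp (- x * cosh t) * cosh t ^ n) * exp t \<le> 2 * (real (Suc n) ^ Suc n / x ^ Suc n)"
    by (simp only: mult.commute)
  hence "exp (- x * cosh t) * cosh t ^ n \<le> 2 * (real (Suc n) ^ Suc n / x ^ Suc n) / exp t"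
    by (simp only: pos_le_divide_eq[OF exp_gt_zero])
  thus ?thesis by (simp add: exp_minus divide_inverse)
qed

lemma int_cmul: "f integrable_on S \<Longrightarrow> (\<lambda>x. (c::real) * f x) integrable_on S"
  using integrable_on_cmult_left[of f S c] by simp

lemma Kint_integrable:
  fixes x :: real
  assumes x: "x > 0"
  shows "(\<lambda>t. exp (- x * cosh t) * cosh t ^ n) integrable_on {0..}"
proof (rule measurable_bounded_by_integrable_imp_integrable)
  show "(\<lambda>t. exp (- x * cosh t) * cosh t ^ n) \<in> borel_measurable (lebesgue_on {0..})"
    by (intro continuous_imp_measurable_on_sets_lebesgue continuous_intros) auto
  show "(\<lambda>t. (2 * real (Suc n) ^ Suc n / x ^ Suc n) * exp (- 1 * t)) integrable_on {0..}"
    by (intro int_cmul integrable_on_exp_minus_to_infinity) auto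
  show "norm (exp (- x * cosh t) * cosh t ^ n) \<le> (2 * real (Suc n) ^ Suc n / x ^ Suc n) * exp (- 1 * t)" for t
    using Kint_bound[OF x, of t n] by simp
  show "{0::real..} \<in> sets lebesgue" by simp
qed

definition Kn :: "nat \<Rightarrow> real \<Rightarrow> real" where
  "Kn n x = integral {0..} (\<lambda>t. exp (- x * cosh t) * cosh t ^ n)"

lemma besselK1_Kn: "besselK1 x = Kn 1 x"
  by (simp add: besselK1_def Kn_def)

lemma Kn_pos:
  assumes x: "x > 0" shows "Kn n x > 0"
proof -
  let ?f = "\<lambda>t. exp (- x * cosh t) * cosh t ^ n"
  have i1: "?f integrable_on {0..1}"
    by (intro integrable_continuous_interval continuous_intros)
  have "integral {0..1} (\<lambda>t::real. exp (- x * cosh 1)) \<le> integral {0..1} ?f"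
  proof (rule integral_le)
    show "(\<lambda>t. exp (- x * cosh 1)) integrable_on {0..1::real}" by (intro integrable_continuous_interval continuous_intros)
    show "?f integrable_on {0..1}" by (rule i1)
    fix t :: real assume t: "t \<in> {0..1}"
    have "cosh t \<le> cosh 1" using t by (subst cosh_real_nonneg_le_iff) auto
    hence "exp (- x * cosh 1) \<le> exp (- x * cosh t)" using x by simp
    also have "\<dots> \<le> exp (- x * cosh t) * cosh t ^ n"
      using cosh_real_ge_1[of t] one_le_power[of "cosh t" n] by simp
    finally show "exp (- x * cosh 1) \<le> ?f t" .
  qed
  also have "\<dots> \<le> integral {0..} ?f"
    by (intro integral_subset_le i1 Kint_integrable x) auto
  finally have "exp (- x * cosh 1) \<le> Kn n x" unfolding Kn_def by simp
  moreover have "exp (- x * cosh 1) > 0" by simp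
  ultimately show ?thesis by linarith
qed

lemma Kn_mono:
  assumes x: "x > 0" and xy: "x \<le> y" shows "Kn n y \<le> Kn n x"
  unfolding Kn_def
proof (rule integral_le)
  show "(\<lambda>t. exp (- y * cosh t) * cosh t ^ n) integrable_on {0..}" using x xy by (intro Kint_integrable) auto
  show "(\<lambda>t. exp (- x * cosh t) * cosh t ^ n) integrable_on {0..}" using x by (intro Kint_integrable) auto
  fix t :: real
  have "- y * cosh t \<le> - x * cosh t" using xy cosh_real_ge_1[of t] by (intro mult_right_mono) auto
  thus "exp (- y * cosh t) * cosh t ^ n \<le> exp (- x * cosh t) * cosh t ^ n"
    using cosh_real_ge_1[of t] by (intro mult_right_mono) auto
qed

lemma expK_mono:
  assumes x: "x > 0" and xy: "x \<le> y" shows "exp y * Kn 1 y \<le> exp x * Kn 1 x"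
proof -
  have e: "exp z * Kn 1 z = integral {0..} (\<lambda>t::real. exp (z * (1 - cosh t)) * cosh t)" if "z > 0" for z
  proof -
    have "exp z * Kn 1 z = integral {0..} (\<lambda>t. exp z * (exp (- z * cosh t) * cosh t ^ 1))"
      unfolding Kn_def by simp
    also have "\<dots> = integral {0..} (\<lambda>t. exp (z * (1 - cosh t)) * cosh t)"
      by (intro integral_cong) (simp add: algebra_simps flip: exp_add)
    finally show ?thesis .
  qed
  have int: "(\<lambda>t::real. exp (z * (1 - cosh t)) * cosh t) integrable_on {0..}" if "z > 0" for z
  proof -
    have "(\<lambda>t. exp z * (exp (- z * cosh t) * cosh t ^ 1)) integrable_on {0..}"
      using int_cmul[OF Kint_integrable[OF that, of 1], of "exp z"] by simp
    also have "(\<lambda>t. exp z * (exp (- z * cosh t) * cosh t ^ 1)) = (\<lambda>t. exp (z * (1 - cosh t)) * cosh t)"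
      by (rule ext) (simp add: algebra_simps flip: exp_add)
    finally show ?thesis .
  qed
  have "integral {0..} (\<lambda>t. exp (y * (1 - cosh t)) * cosh t) \<le> integral {0..} (\<lambda>t. exp (x * (1 - cosh t)) * cosh t)"
  proof (rule integral_le)
    show "(\<lambda>t. exp (y * (1 - cosh t)) * cosh t) integrable_on {0..}" using x xy by (intro int) auto
    show "(\<lambda>t. exp (x * (1 - cosh t)) * cosh t) integrable_on {0..}" using x by (intro int) auto
    fix t :: real
    have "y * (1 - cosh t) \<le> x * (1 - cosh t)" using xy cosh_real_ge_1[of t] by (intro mult_right_mono_neg) auto
    thus "exp (y * (1 - cosh t)) * cosh t \<le> exp (x * (1 - cosh t)) * cosh t"
      using cosh_real_ge_1[of t] by (intro mult_right_mono) auto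
  qed
  thus ?thesis using e[of x] e[of y] x xy by simp
qed

lemma K1_lip:
  assumes a: "a > 0" and ax: "a \<le> x" and xy: "x \<le> y"
  shows "Kn 1 x - Kn 1 y \<le> (y - x) * Kn 2 a"
proof -
  have x: "x > 0" using a ax by simp
  have "Kn 1 x - Kn 1 y = integral {0..} (\<lambda>t. exp (- x * cosh t) * cosh t ^ 1 - exp (- y * cosh t) * cosh t ^ 1)"
    unfolding Kn_def using x xy by (intro integral_diff[symmetric] Kint_integrable) auto
  also have "\<dots> \<le> integral {0..} (\<lambda>t. (y - x) * (exp (- a * cosh t) * cosh t ^ 2))"
  proof (rule integral_le)
    show "(\<lambda>t. exp (- x * cosh t) * cosh t ^ 1 - exp (- y * cosh t) * cosh t ^ 1) integrable_on {0..}"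
      using x xy by (intro integrable_diff Kint_integrable) auto
    show "(\<lambda>t. (y - x) * (exp (- a * cosh t) * cosh t ^ 2)) integrable_on {0..}"
      using int_cmul[OF Kint_integrable[OF a, of 2], of "y - x"] by simp
    fix t :: real
    have c: "cosh t \<ge> 1" by (rule cosh_real_ge_1)
    have yx: "(y - x) * cosh t \<ge> 0" using xy c by simp
    have "exp (- x * cosh t) - exp (- y * cosh t) = exp (- x * cosh t) * (1 - exp (- ((y - x) * cosh t)))"
      by (simp add: algebra_simps flip: exp_add)
    also have "\<dots> \<le> exp (- x * cosh t) * ((y - x) * cosh t)"
      using exp_ge_add_one_self[of "- ((y - x) * cosh t)"] by (intro mult_left_mono) auto
    also have "\<dots> \<le> exp (- a * cosh t) * ((y - x) * cosh t)"
    proof (rule mult_right_mono[OF _ yx])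
      have "a * cosh t \<le> x * cosh t" using ax c by (intro mult_right_mono) auto
      thus "exp (- x * cosh t) \<le> exp (- a * cosh t)" by simp
    qed
    finally have "exp (- x * cosh t) - exp (- y * cosh t) \<le> exp (- a * cosh t) * ((y - x) * cosh t)" .
    hence ineq: "(exp (- x * cosh t) - exp (- y * cosh t)) * cosh t \<le> exp (- a * cosh t) * ((y - x) * cosh t) * cosh t"
      using c by (intro mult_right_mono) auto
    have eq1: "exp (- x * cosh t) * cosh t ^ 1 - exp (- y * cosh t) * cosh t ^ 1 = (exp (- x * cosh t) - exp (- y * cosh t)) * cosh t"
      by (simp add: left_diff_distrib)
    have eq2: "(y - x) * (exp (- a * cosh t) * cosh t ^ 2) = exp (- a * cosh t) * ((y - x) * cosh t) * cosh t"
      by (simp add: power2_eq_square mult_ac)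
    show "exp (- x * cosh t) * cosh t ^ 1 - exp (- y * cosh t) * cosh t ^ 1 \<le> (y - x) * (exp (- a * cosh t) * cosh t ^ 2)"
      unfolding eq1 eq2 by (rule ineq)
  qed
  also have "\<dots> = (y - x) * Kn 2 a" unfolding Kn_def by simp
  finally show ?thesis .
qed

lemma K1_cont:
  assumes a: "a > 0" shows "continuous_on {a..} (Kn 1)"
proof (rule lipschitz_on_continuous_on)
  show "(Kn 2 a)-lipschitz_on {a..} (Kn 1)"
  proof (rule lipschitz_onI)
    show "Kn 2 a \<ge> 0" using Kn_pos[OF a, of 2] by simp
    have main: "dist (Kn 1 x) (Kn 1 y) \<le> Kn 2 a * dist x y" if x: "x \<in> {a..}" and xy: "x \<le> y" for x y
    proof -
      have "Kn 1 y \<le> Kn 1 x" using Kn_mono[of x y 1] xy x a by auto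
      hence d1: "dist (Kn 1 x) (Kn 1 y) = Kn 1 x - Kn 1 y" by (simp add: dist_real_def)
      have d2: "dist x y = y - x" using xy by (simp add: dist_real_def)
      have "Kn 1 x - Kn 1 y \<le> (y - x) * Kn 2 a" using K1_lip[OF a _ xy] x by auto
      thus ?thesis unfolding d1 d2 by (simp add: mult.commute)
    qed
    fix x y assume x: "x \<in> {a..}" and y: "y \<in> {a..}"
    show "dist (Kn 1 x) (Kn 1 y) \<le> Kn 2 a * dist x y"
    proof (cases "x \<le> y")
      case True thus ?thesis using main x by auto
    next
      case False thus ?thesis using main[of y x] y by (simp add: dist_commute)
    qed
  qed
qed

definition bI :: "nat \<Rightarrow> real" where "bI k = 1 / (fact k * fact (Suc k))"
definition FI :: "real \<Rightarrow> real" where "FI u = (\<Sum>k. bI k * u ^ k)"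
definition FI' :: "real \<Rightarrow> real" where "FI' u = (\<Sum>k. diffs bI k * u ^ k)"

lemma bI_pos: "bI k > 0" by (simp add: bI_def)

lemma summable_bI: "summable (\<lambda>k. bI k * u ^ k)"
proof (rule summable_comparison_test)
  show "summable (\<lambda>k. inverse (fact k) * \<bar>u\<bar> ^ k)" by (rule summable_exp)
  show "\<exists>N. \<forall>n\<ge>N. norm (bI n * u ^ n) \<le> inverse (fact n) * \<bar>u\<bar> ^ n"
  proof (intro exI allI impI)
    fix n :: nat
    have f1: "(1::real) \<le> fact (Suc n)" by (rule fact_ge_1)
    have "(fact n :: real) * 1 \<le> fact n * fact (Suc n)" using f1 by (intro mult_left_mono) auto
    hence "1 / (fact n * fact (Suc n)) \<le> (1::real) / fact n"
      by (intro divide_left_mono) auto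
    hence le: "\<bar>u\<bar> ^ n * (1 / (fact n * fact (Suc n))) \<le> \<bar>u\<bar> ^ n * (1 / fact n)"
      by (intro mult_left_mono) auto
    have "norm (bI n * u ^ n) = \<bar>u\<bar> ^ n * (1 / (fact n * fact (Suc n)))"
      by (simp add: bI_def abs_mult power_abs)
    also note le
    finally show "norm (bI n * u ^ n) \<le> inverse (fact n) * \<bar>u\<bar> ^ n" by (simp add: divide_inverse mult.commute)
  qed
qed

lemma summable_dbI: "summable (\<lambda>k. diffs bI k * u ^ k)"
  by (rule termdiff_converges_all) (rule summable_bI)

lemma FI_deriv: "(FI has_real_derivative FI' u) (at u)"
  unfolding FI_def FI'_def by (rule termdiffs_strong_converges_everywhere) (rule summable_bI)

lemma besselI1_FI: "besselI1 x = x / 2 * FI (x ^ 2 / 4)"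
proof -
  have L: "(\<lambda>k. (x / 2) ^ (2 * k + 1) / (fact k * fact (k + 1))) = (\<lambda>k. x / 2 * (bI k * (x ^ 2 / 4) ^ k))"
  proof
    fix k
    have "(x / 2) ^ (2 * k + 1) = ((x / 2) ^ 2) ^ k * (x / 2)"
      by (simp only: power_add power_mult power_one_right)
    also have "(x / 2) ^ 2 = x ^ 2 / 4" by (simp add: power_divide)
    finally have "(x / 2) ^ (2 * k + 1) = x / 2 * (x ^ 2 / 4) ^ k" by simp
    thus "(x / 2) ^ (2 * k + 1) / (fact k * fact (k + 1)) = x / 2 * (bI k * (x ^ 2 / 4) ^ k)"
      by (simp add: bI_def)
  qed
  have "besselI1 x = (\<Sum>k. x / 2 * (bI k * (x ^ 2 / 4) ^ k))" unfolding besselI1_def L ..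
  also have "\<dots> = x / 2 * FI (x ^ 2 / 4)" unfolding FI_def by (rule suminf_mult[OF summable_bI])
  finally show ?thesis .
qed

lemma FI_ge1: "u \<ge> 0 \<Longrightarrow> FI u \<ge> 1"
proof -
  assume u: "u \<ge> 0"
  have "sum (\<lambda>k. bI k * u ^ k) {0} \<le> FI u"
    unfolding FI_def using u by (intro sum_le_suminf summable_bI) (auto intro: mult_nonneg_nonneg less_imp_le[OF bI_pos])
  thus ?thesis by (simp add: bI_def)
qed

lemma key_term:
  fixes y :: real assumes y: "y \<ge> 0"
  shows "y * (diffs bI k * (y ^ 2) ^ k) \<le> (bI k * (y ^ 2) ^ k + bI (Suc k) * (y ^ 2) ^ Suc k) / 2"
proof -
  define \<beta> where "\<beta> = bI (Suc k)"
  define w where "w = (y ^ 2) ^ k"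
  have f1: "(fact (Suc k)::real) = (real k + 1) * fact k" by simp
  have f2: "(fact (Suc (Suc k))::real) = (real k + 2) * ((real k + 1) * fact k)" by (simp add: algebra_simps)
  have fp: "(fact k :: real) > 0" by simp
  have bk: "bI k = (real k + 1) * (real k + 2) * \<beta>"
  proof -
    have gen: "1 / (f * (A * f)) = A * B * (1 / (A * f * (B * (A * f))))" if "A \<noteq> 0" "B \<noteq> 0" "f \<noteq> 0" for A B f :: real
      using that by (simp add: field_simps)
    show ?thesis unfolding \<beta>_def bI_def f1 f2
      by (rule gen) (use fp in auto)
  qed
  have d: "diffs bI k = (real k + 1) * \<beta>" unfolding diffs_def \<beta>_def by simp
  have nn: "0 \<le> \<beta> * w * ((y - (real k + 1)) ^ 2 + (real k + 1))"
    unfolding \<beta>_def w_def using bI_pos[of "Suc k"] by (intro mult_nonneg_nonneg) auto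
  have "(bI k * (y ^ 2) ^ k + bI (Suc k) * (y ^ 2) ^ Suc k) / 2 - y * (diffs bI k * (y ^ 2) ^ k)
        = \<beta> * w * ((y - (real k + 1)) ^ 2 + (real k + 1)) / 2"
  proof -
    have ws: "(y ^ 2) ^ Suc k = y ^ 2 * w" by (simp add: w_def)
    show ?thesis unfolding bk d ws w_def[symmetric] \<beta>_def[symmetric]
      by (simp add: power2_eq_square algebra_simps)
  qed
  with nn show ?thesis by linarith
qed

lemma key_ineq:
  fixes y :: real assumes y: "y \<ge> 0"
  shows "y * FI' (y ^ 2) \<le> FI (y ^ 2)"
proof -
  have s1: "summable (\<lambda>k. bI k * (y ^ 2) ^ k)" by (rule summable_bI)
  have s2: "summable (\<lambda>k. bI (Suc k) * (y ^ 2) ^ Suc k)"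
    using s1 by (subst summable_Suc_iff) 
  have "y * FI' (y ^ 2) = (\<Sum>k. y * (diffs bI k * (y ^ 2) ^ k))"
    unfolding FI'_def by (simp add: suminf_mult summable_dbI)
  also have "\<dots> \<le> (\<Sum>k. (bI k * (y ^ 2) ^ k + bI (Suc k) * (y ^ 2) ^ Suc k) / 2)"
    using s1 s2 y by (intro suminf_le key_term summable_mult summable_dbI summable_divide summable_add) auto
  also have "\<dots> = ((\<Sum>k. bI k * (y ^ 2) ^ k) + (\<Sum>k. bI (Suc k) * (y ^ 2) ^ Suc k)) / 2"
    using suminf_divide[OF summable_add[OF s1 s2], of 2] suminf_add[OF s1 s2] by simp
  also have "\<dots> = (FI (y ^ 2) + (FI (y ^ 2) - bI 0)) / 2"
  proof -
    have "(\<Sum>k. bI (Suc k) * (y ^ 2) ^ Suc k) = FI (y ^ 2) - bI 0"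
      using suminf_split_head[OF s1] unfolding FI_def by simp
    thus ?thesis unfolding FI_def by simp
  qed
  also have "\<dots> \<le> FI (y ^ 2)" using bI_pos[of 0] by simp
  finally show ?thesis .
qed

lemma GreenG_diag: "GreenG x x = besselI1 x * besselK1 x"
  by (simp add: GreenG_def)

lemma PI_mono:
  assumes "0 \<le> x" "x \<le> y"
  shows "exp (- y) * FI (y ^ 2 / 4) \<le> exp (- x) * FI (x ^ 2 / 4)"
proof (rule DERIV_nonpos_imp_nonincreasing[OF assms(2)])
  fix z assume z: "x \<le> z" "z \<le> y"
  have d1: "((\<lambda>z. FI (z ^ 2 / 4)) has_real_derivative FI' (z ^ 2 / 4) * (z / 2)) (at z)"
    by (rule DERIV_chain2[OF FI_deriv]) (auto intro!: derivative_eq_intros)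
  have de: "((\<lambda>z. exp (- z)) has_real_derivative exp (- z) * (-1)) (at z)"
    by (auto intro!: derivative_eq_intros)
  have d2: "((\<lambda>z. exp (- z) * FI (z ^ 2 / 4)) has_real_derivative
      (exp (- z) * (-1) * FI (z ^ 2 / 4) + FI' (z ^ 2 / 4) * (z / 2) * exp (- z))) (at z)"
    by (rule DERIV_mult[OF de d1])
  have zz: "(z / 2) ^ 2 = z ^ 2 / 4" by (simp add: power_divide)
  have "(z / 2) * FI' ((z / 2) ^ 2) \<le> FI ((z / 2) ^ 2)" using z assms by (intro key_ineq) auto
  hence "FI' (z ^ 2 / 4) * (z / 2) - FI (z ^ 2 / 4) \<le> 0" unfolding zz by (simp add: mult.commute)
  hence "exp (- z) * (FI' (z ^ 2 / 4) * (z / 2) - FI (z ^ 2 / 4)) \<le> 0"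
    by (simp add: mult_nonneg_nonpos)
  thus "\<exists>D. ((\<lambda>z. exp (- z) * FI (z ^ 2 / 4)) has_real_derivative D) (at z) \<and> D \<le> 0"
    using d2 by (intro exI[of _ "exp (- z) * (-1) * FI (z ^ 2 / 4) + FI' (z ^ 2 / 4) * (z / 2) * exp (- z)"])
      (auto simp: algebra_simps)
qed

definition Phi :: "real \<Rightarrow> real" where "Phi x = GreenG x x / x ^ 2"

lemma Phi_split:
  assumes x: "x > 0"
  shows "Phi x = (exp (- x) * FI (x ^ 2 / 4)) * (exp x * Kn 1 x) / (2 * x)"
proof -
  have "Phi x = x / 2 * FI (x ^ 2 / 4) * Kn 1 x / x ^ 2"
    unfolding Phi_def GreenG_diag besselI1_FI besselK1_Kn ..
  also have "\<dots> = (exp (- x) * exp x) * FI (x ^ 2 / 4) * Kn 1 x / (2 * x)"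
    using x by (simp add: power2_eq_square field_simps flip: exp_add)
  finally show ?thesis by (simp add: mult_ac)
qed

lemma Phi_strict:
  assumes x: "0 < x" and xy: "x < y"
  shows "Phi y < Phi x"
proof -
  have y: "y > 0" using x xy by simp
  define P where "P z = exp (- z) * FI (z ^ 2 / 4)" for z
  define Q where "Q z = exp z * Kn 1 z" for z
  have Ppos: "P z > 0" if "z \<ge> 0" for z
    unfolding P_def using FI_ge1[of "z^2/4"] that by (intro mult_pos_pos) auto
  have Qpos: "Q z > 0" if "z > 0" for z
    unfolding Q_def using Kn_pos[OF that, of 1] by simp
  have PP: "P y \<le> P x" unfolding P_def using x xy by (intro PI_mono) auto
  have QQ: "Q y \<le> Q x" unfolding Q_def using x xy by (intro expK_mono) auto
  have "Phi y = P y * Q y / (2 * y)" unfolding P_def Q_def using Phi_split[OF y] .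
  also have "\<dots> \<le> P x * Q x / (2 * y)"
    using PP QQ Ppos[of y] Qpos[OF y] y by (intro divide_right_mono mult_mono) auto
  also have "\<dots> < P x * Q x / (2 * x)"
    using Ppos[of x] Qpos[OF x] x xy by (intro divide_strict_left_mono mult_pos_pos) auto
  also have "\<dots> = Phi x" unfolding P_def Q_def using Phi_split[OF x] by simp
  finally show ?thesis .
qed

lemma I1_cont: "continuous_on S besselI1"
proof -
  have cF: "continuous_on UNIV FI"
    by (rule continuous_at_imp_continuous_on) (auto intro: DERIV_isCont FI_deriv)
  have "continuous_on S (\<lambda>x. x / 2 * FI (x ^ 2 / 4))"
    by (intro continuous_intros continuous_on_compose2[OF cF]) auto
  thus ?thesis unfolding besselI1_FI[abs_def] .
qed

lemma Phi_cont:
  assumes a: "a > 0" shows "continuous_on {a..b} Phi"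
proof -
  have "continuous_on {a..b} (\<lambda>x. besselI1 x * Kn 1 x / x ^ 2)"
    using a by (intro continuous_intros I1_cont continuous_on_subset[OF K1_cont[OF a]]) auto
  thus ?thesis unfolding Phi_def[abs_def] GreenG_diag besselK1_Kn .
qed

lemma Phi_lower:
  assumes x: "0 < x" "x \<le> 1"
  shows "Phi x \<ge> Kn 1 1 / (2 * x)"
proof -
  have "Phi x = x / 2 * FI (x ^ 2 / 4) * Kn 1 x / x ^ 2"
    unfolding Phi_def GreenG_diag besselI1_FI besselK1_Kn ..
  also have "\<dots> = FI (x ^ 2 / 4) * Kn 1 x / (2 * x)"
    using x by (simp add: power2_eq_square field_simps)
  also have "\<dots> \<ge> 1 * Kn 1 1 / (2 * x)"
    using x FI_ge1[of "x^2/4"] Kn_mono[of x 1 1] Kn_pos[of 1 1]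
    by (intro divide_right_mono mult_mono) auto
  finally show ?thesis by simp
qed

lemma G_pos: "x > 0 \<Longrightarrow> GreenG x x > 0"
  using Phi_split[of x] Phi_def[of x] FI_ge1[of "x^2/4"] Kn_pos[of x 1]
  by (auto simp: GreenG_diag besselI1_FI besselK1_Kn intro!: mult_pos_pos)

lemma energy_const:
  fixes M :: real and q p :: "real \<Rightarrow> real" and T :: "real set"
  assumes M_pos: "M > 0"
    and T_open: "open T" and T_int: "is_interval T"
    and q_pos: "\<forall>t\<in>T. q t > 0"
    and ham_q: "\<forall>t\<in>T. \<exists>D. ((\<lambda>y. peakonH M y (q t)) has_real_derivative D) (at (p t))
                          \<and> (q has_real_derivative D) (at t)"
    and ham_p: "\<forall>t\<in>T. \<exists>D. ((\<lambda>x. peakonH M (p t) x) has_real_derivative D) (at (q t))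
                          \<and> (p has_real_derivative (- D)) (at t)"
  shows "\<exists>c. \<forall>t\<in>T. ((p t) ^ 2 + M ^ 2 / (q t) ^ 2) * GreenG (q t) (q t) = c"
proof (rule has_field_derivative_zero_constant)
  show "convex T" using T_int by (simp add: is_interval_convex)
  fix t assume t: "t \<in> T"
  define g where "g x = GreenG x x" for x
  define P where "P = p t"
  define Q where "Q = q t"
  have Q: "Q > 0" using q_pos t unfolding Q_def by auto
  obtain Dq where Dq1: "((\<lambda>y. peakonH M y Q) has_real_derivative Dq) (at P)" and Dq2: "(q has_real_derivative Dq) (at t)"
    using ham_q t unfolding P_def Q_def by blast
  obtain Dp where Dp1: "((\<lambda>x. peakonH M P x) has_real_derivative Dp) (at Q)" and Dp2: "(p has_real_derivative (- Dp)) (at t)"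
    using ham_p t unfolding P_def Q_def by blast
  have "((\<lambda>y. peakonH M y Q) has_real_derivative P * g Q) (at P)"
    unfolding peakonH_def g_def by (auto intro!: derivative_eq_intros)
  hence Dq_eq: "Dq = P * g Q" using Dq1 by (rule DERIV_unique[rotated])
  define w where "w x = (1/2) * (P ^ 2 + M ^ 2 / x ^ 2)" for x
  have wpos: "w x > 0" if "x > 0" for x
    unfolding w_def using that M_pos by (intro mult_pos_pos add_nonneg_pos) auto
  have dw: "(w has_real_derivative - (M ^ 2 / Q ^ 3)) (at Q)"
    unfolding w_def using Q by (auto intro!: derivative_eq_intros simp: field_simps power2_eq_square power3_eq_cube)
  have "((\<lambda>x. peakonH M P x / w x) has_real_derivative
         ((Dp * w Q - peakonH M P Q * - (M ^ 2 / Q ^ 3)) / (w Q * w Q))) (at Q)"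
    using wpos[OF Q] by (intro DERIV_divide Dp1 dw) auto
  hence "(g has_real_derivative ((Dp * w Q - peakonH M P Q * - (M ^ 2 / Q ^ 3)) / (w Q * w Q))) (at Q)"
  proof (rule has_field_derivative_transform_within_open)
    show "open {0::real<..}" by simp
    show "Q \<in> {0<..}" using Q by simp
    fix x :: real assume "x \<in> {0<..}"
    hence "w x > 0" using wpos by auto
    thus "peakonH M P x / w x = g x" unfolding peakonH_def g_def w_def by simp
  qed
  then obtain g' where g': "(g has_real_derivative g') (at Q)" by blast
  have "((\<lambda>x. peakonH M P x) has_real_derivative (- (M ^ 2 / Q ^ 3)) * g Q + g' * w Q) (at Q)"
  proof -
    have "((\<lambda>x. w x * g x) has_real_derivative (- (M ^ 2 / Q ^ 3)) * g Q + g' * w Q) (at Q)"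
      by (rule DERIV_mult[OF dw g'])
    moreover have "(\<lambda>x. w x * g x) = (\<lambda>x. peakonH M P x)"
      by (rule ext) (simp add: peakonH_def w_def g_def)
    ultimately show ?thesis by simp
  qed
  hence Dp_eq: "Dp = (- (M ^ 2 / Q ^ 3)) * g Q + g' * w Q" using Dp1 by (rule DERIV_unique[rotated])
  have gq: "((\<lambda>s. g (q s)) has_real_derivative g' * Dq) (at t)"
    using DERIV_chain2[of g g' "q" t Dq] g' Dq2 unfolding Q_def by simp
  have qne: "q t \<noteq> 0" using Q unfolding Q_def by simp
  have "((\<lambda>s. ((p s) ^ 2 + M ^ 2 / (q s) ^ 2) * g (q s)) has_real_derivative
          (2 * P * (- Dp) + M ^ 2 * (- (2 * Q * Dq) / (Q ^ 2) ^ 2)) * g Q + (P ^ 2 + M ^ 2 / Q ^ 2) * (g' * Dq)) (at t)"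
    unfolding P_def Q_def using qne
    by (auto intro!: derivative_eq_intros Dp2 Dq2 gq simp: power2_eq_square)
  moreover have "(2 * P * (- Dp) + M ^ 2 * (- (2 * Q * Dq) / (Q ^ 2) ^ 2)) * g Q + (P ^ 2 + M ^ 2 / Q ^ 2) * (g' * Dq) = 0"
    unfolding Dp_eq Dq_eq w_def using Q by (simp add: field_simps power2_eq_square power3_eq_cube)
  ultimately have "((\<lambda>s. ((p s) ^ 2 + M ^ 2 / (q s) ^ 2) * GreenG (q s) (q s)) has_real_derivative 0) (at t)"
    unfolding g_def by simp
  thus "((\<lambda>s. ((p s) ^ 2 + M ^ 2 / (q s) ^ 2) * GreenG (q s) (q s)) has_field_derivative 0) (at t within T)"
    by (rule has_field_derivative_at_within)
qed

lemma fixpt_iff: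
  assumes M: "M > 0" and E: "E > 0" and x: "x > 0"
  shows "(x = M * sqrt (GreenG x x / E)) \<longleftrightarrow> Phi x = E / M ^ 2"
proof -
  have g: "GreenG x x > 0" using G_pos[OF x] .
  have "(x = M * sqrt (GreenG x x / E)) \<longleftrightarrow> x ^ 2 = M ^ 2 * (GreenG x x / E)"
  proof
    assume "x = M * sqrt (GreenG x x / E)"
    hence "x ^ 2 = M ^ 2 * (sqrt (GreenG x x / E)) ^ 2" by (metis power_mult_distrib)
    thus "x ^ 2 = M ^ 2 * (GreenG x x / E)" using g E by simp
  next
    assume h: "x ^ 2 = M ^ 2 * (GreenG x x / E)"
    have "x = sqrt (x ^ 2)" using x by simp
    also have "\<dots> = sqrt (M ^ 2) * sqrt (GreenG x x / E)" unfolding h real_sqrt_mult ..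
    also have "\<dots> = M * sqrt (GreenG x x / E)" using M by simp
    finally show "x = M * sqrt (GreenG x x / E)" .
  qed
  also have "\<dots> \<longleftrightarrow> Phi x = E / M ^ 2"
    unfolding Phi_def using M E x by (auto simp: field_simps)
  finally show ?thesis .
qed

theorem proposition5:
  fixes M E :: real and q p :: "real \<Rightarrow> real" and T :: "real set" and t0 :: real
  assumes M_pos: "M > 0"
    and T_open: "open T" and T_int: "is_interval T" and t0_in: "t0 \<in> T"
    and q_pos: "\<forall>t\<in>T. q t > 0"
    and ham_q: "\<forall>t\<in>T. \<exists>D. ((\<lambda>y. peakonH M y (q t)) has_real_derivative D) (at (p t))
                          \<and> (q has_real_derivative D) (at t)"
    and ham_p: "\<forall>t\<in>T. \<exists>D. ((\<lambda>x. peakonH M (p t) x) has_real_derivative D) (at (q t))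
                          \<and> (p has_real_derivative (- D)) (at t)"
    and E_def: "E = ((p t0) ^ 2 + M ^ 2 / (q t0) ^ 2) * GreenG (q t0) (q t0)"
    and E_pos: "E > 0"
  shows "(\<exists>!qs. qs > 0 \<and> qs = M * sqrt (GreenG qs qs / E))
         \<and> (\<forall>qs. qs > 0 \<and> qs = M * sqrt (GreenG qs qs / E) \<longrightarrow> (\<forall>t\<in>T. q t \<ge> qs))"
proof -
  obtain c where c: "\<forall>t\<in>T. ((p t) ^ 2 + M ^ 2 / (q t) ^ 2) * GreenG (q t) (q t) = c"
    using energy_const[OF M_pos T_open T_int q_pos ham_q ham_p] by blast
  have cE: "c = E" using c t0_in E_def by auto
  have Phi_q: "Phi (q t) \<le> E / M ^ 2" if t: "t \<in> T" for t
  proof -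
    have qt: "q t > 0" using q_pos t by auto
    have g: "GreenG (q t) (q t) > 0" using G_pos[OF qt] .
    have "M ^ 2 / (q t) ^ 2 * GreenG (q t) (q t) \<le> ((p t) ^ 2 + M ^ 2 / (q t) ^ 2) * GreenG (q t) (q t)"
      using g by (intro mult_right_mono) auto
    also have "\<dots> = E" using c t cE by auto
    finally have "M ^ 2 / (q t) ^ 2 * GreenG (q t) (q t) \<le> E" .
    hence "M ^ 2 * Phi (q t) \<le> E" unfolding Phi_def by (simp add: field_simps)
    thus ?thesis using M_pos by (simp add: field_simps mult.commute)
  qed
  have char: "\<And>x. x > 0 \<Longrightarrow> (x > 0 \<and> x = M * sqrt (GreenG x x / E)) \<longleftrightarrow> Phi x = E / M ^ 2"
    using fixpt_iff[OF M_pos E_pos] by auto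
  have q0: "q t0 > 0" using q_pos t0_in by auto
  define K where "K = Kn 1 1"
  have K: "K > 0" unfolding K_def by (rule Kn_pos) simp
  define a where "a = min (q t0) (min 1 (K * M ^ 2 / (2 * E)))"
  have a: "a > 0" "a \<le> q t0" "a \<le> 1" "a \<le> K * M ^ 2 / (2 * E)"
    unfolding a_def using q0 K M_pos E_pos by auto
  have "E / M ^ 2 \<le> K / (2 * a)"
    using a M_pos E_pos K by (simp add: field_simps)
  also have "\<dots> \<le> Phi a" unfolding K_def using a by (intro Phi_lower) auto
  finally have Pa: "E / M ^ 2 \<le> Phi a" .
  obtain qs where qs: "a \<le> qs" "qs \<le> q t0" "Phi qs = E / M ^ 2"
    using IVT2'[of Phi "q t0" "E / M ^ 2" a] Phi_q[OF t0_in] Pa a(2) Phi_cont[OF a(1)] by blast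
  have qs_pos: "qs > 0" using qs a by auto
  have uniq: "x = y" if "x > 0" "y > 0" "Phi x = Phi y" for x y
    using Phi_strict[of x y] Phi_strict[of y x] that by (cases x y rule: linorder_cases) auto
  show ?thesis
  proof (intro conjI allI impI ballI)
    show "\<exists>!qs. qs > 0 \<and> qs = M * sqrt (GreenG qs qs / E)"
    proof (rule ex1I[of _ qs])
      show "qs > 0 \<and> qs = M * sqrt (GreenG qs qs / E)" using char[OF qs_pos] qs qs_pos by auto
      fix y assume "y > 0 \<and> y = M * sqrt (GreenG y y / E)"
      hence "y > 0" "Phi y = E / M ^ 2" using char by auto
      thus "y = qs" using uniq[of y qs] qs qs_pos by auto
    qed
  next
    fix r t assume r: "r > 0 \<and> r = M * sqrt (GreenG r r / E)" and t: "t \<in> T"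
    have Pr: "Phi r = E / M ^ 2" using char r by auto
    have qt: "q t > 0" using q_pos t by auto
    show "q t \<ge> r"
    proof (rule ccontr)
      assume "\<not> q t \<ge> r"
      hence "Phi r < Phi (q t)" using Phi_strict[of "q t" r] qt by auto
      thus False using Phi_q[OF t] Pr by simp
    qed
  qed
qed

end
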